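(* Let $(\beta_n),(\gamma_n)$ be sequences of positive real numbers that are non-decreasing, satisfy $\gamma_n\ge\beta_n$ and $\gamma_n-\beta_n\to\infty$. Let $t=(t_n)$ be a sequence of positive real numbers with $\liminf_{n}t_n>0$ and $T_{\beta\gamma(n)}:=\sum_{k\in[\beta_n,\gamma_n]}t_k\to\infty$. Let $0<\theta_1\le\theta_2\le1$. Suppose $\liminf_{n\to\infty}\frac{\gamma_n}{T_{\beta\gamma(n)}}>1$ and $0<\beta_n\le1$ for all $n$. Let $\hat f_k,\hat f:[a,b]\to L(\mathbb R)$ be fuzzy functions such that for every $x\in[a,b]$, $$\frac{1}{T_{\beta\gamma(n)}^{\theta_1}}\sum_{k\in[\beta_n,\gamma_n]}t_k\,d(\hat f_k(x),\hat f(x))\to0 .$$ Then for every $\varepsilon>0$ and every $x\in[a,b]$, $$\lim_{n\to\infty}\frac{1}{T_{\beta\gamma(n)}^{\theta_2}}\Big|\{k\in\mathbb N: k\le T_{\beta\gamma(n)},\ t_k\,d(\hat f_k(x),\hat f(x))\ge\varepsilon\}\Big|=0 .$$ That is, $N^{\theta_1}_{\beta\gamma}(t)\subset SP^{\theta_2}_{\beta\gamma}(t)$.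
   Context: $L(\mathbb R)$ is the set of fuzzy real numbers (normal, fuzzy convex, upper semicontinuous maps $\mathbb R\to[0,1]$ with compact support), with $\alpha$-cuts $[(\hat x)^-_\alpha,(\hat x)^+_\alpha]$ and metric $d(\hat x,\hat y)=\sup_{0\le\alpha\le1}\max\{|(\hat x)^-_\alpha-(\hat y)^-_\alpha|,|(\hat x)^+_\alpha-(\hat y)^+_\alpha|\}$. Sums $\sum_{k\in[\beta_n,\gamma_n]}$ range over positive integers $k$ in the interval. $|\cdot|$ denotes cardinality. $N^{\theta}_{\beta\gamma}(t)$ denotes absolutely weighted $\beta\gamma$-summability of order $\theta$ (the first displayed condition with $\theta$), and $SP^{\theta}_{\beta\gamma}(t)$ denotes weighted $\beta\gamma$-pointwise statistical convergence of order $\theta$ (the second displayed condition with $\theta$). *)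

theory Defs
  imports "HOL-Analysis.Analysis"
begin

text \<open>Fuzzy real numbers are represented by their membership functions real => real.\<close>

definition upper_semicont :: "(real \<Rightarrow> real) \<Rightarrow> bool" where
  "upper_semicont u \<longleftrightarrow>
     (\<forall>x. \<forall>e>0. \<exists>\<delta>>0. \<forall>y. \<bar>y - x\<bar> < \<delta> \<longrightarrow> u y < u x + e)"

definition fuzzy_real :: "(real \<Rightarrow> real) \<Rightarrow> bool" where
  "fuzzy_real u \<longleftrightarrow>
     (\<forall>x. 0 \<le> u x \<and> u x \<le> 1) \<and>
     (\<exists>x. u x = 1) \<and>
     (\<forall>x y l. 0 \<le> l \<and> l \<le> 1 \<longrightarrow> min (u x) (u y) \<le> u (l * x + (1 - l) * y)) \<and>
     upper_semicont u \<and>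
     compact (closure {x. 0 < u x})"

definition fcut :: "(real \<Rightarrow> real) \<Rightarrow> real \<Rightarrow> real set" where
  "fcut u \<alpha> = (if \<alpha> = 0 then closure {x. 0 < u x} else {x. \<alpha> \<le> u x})"

definition fcut_lo :: "(real \<Rightarrow> real) \<Rightarrow> real \<Rightarrow> real" where
  "fcut_lo u \<alpha> = Inf (fcut u \<alpha>)"

definition fcut_hi :: "(real \<Rightarrow> real) \<Rightarrow> real \<Rightarrow> real" where
  "fcut_hi u \<alpha> = Sup (fcut u \<alpha>)"

definition fuzzy_dist :: "(real \<Rightarrow> real) \<Rightarrow> (real \<Rightarrow> real) \<Rightarrow> real" where
  "fuzzy_dist u v = (SUP \<alpha>\<in>{0..1}. max \<bar>fcut_lo u \<alpha> - fcut_lo v \<alpha>\<bar> \<bar>fcut_hi u \<alpha> - fcut_hi v \<alpha>\<bar>)"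

definition bg_int :: "(nat \<Rightarrow> real) \<Rightarrow> (nat \<Rightarrow> real) \<Rightarrow> nat \<Rightarrow> nat set" where
  "bg_int \<beta> \<gamma> n = {k. 0 < k \<and> \<beta> n \<le> real k \<and> real k \<le> \<gamma> n}"

definition T_bg :: "(nat \<Rightarrow> real) \<Rightarrow> (nat \<Rightarrow> real) \<Rightarrow> (nat \<Rightarrow> real) \<Rightarrow> nat \<Rightarrow> real" where
  "T_bg \<beta> \<gamma> t n = (\<Sum>k\<in>bg_int \<beta> \<gamma> n. t k)"

end

theory Submission
  imports Defs
begin

lemma inf_sup_bound:
  fixes A :: "real set"
  assumes "A \<noteq> {}" "\<And>x. x \<in> A \<Longrightarrow> \<bar>x\<bar> \<le> B"
  shows "\<bar>Inf A\<bar> \<le> B" "\<bar>Sup A\<bar> \<le> B"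
proof -
  obtain a where a: "a \<in> A" using assms(1) by auto
  have bb: "bdd_below A" using assms(2) unfolding bdd_below_def by (metis abs_le_D2 minus_le_iff)
  have ba: "bdd_above A" using assms(2) unfolding bdd_above_def by (metis abs_le_D1)
  have "Inf A \<le> a" using cInf_lower[OF a bb] .
  moreover have "-B \<le> Inf A" using assms by (intro cInf_greatest) (auto, metis abs_le_D2 minus_le_iff)
  moreover have "a \<le> B" using assms(2)[OF a] by auto
  ultimately show "\<bar>Inf A\<bar> \<le> B" by auto
  have "a \<le> Sup A" using cSup_upper[OF a ba] .
  moreover have "Sup A \<le> B" using assms by (intro cSup_least) (auto simp: abs_le_iff)
  moreover have "-B \<le> a" using assms(2)[OF a] by auto
  ultimately show "\<bar>Sup A\<bar> \<le> B" by auto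
qed

lemma fcut_bound:
  assumes "fuzzy_real u"
  obtains B where "\<And>\<alpha>. \<alpha> \<in> {0..1} \<Longrightarrow> \<bar>fcut_lo u \<alpha>\<bar> \<le> B \<and> \<bar>fcut_hi u \<alpha>\<bar> \<le> B"
proof -
  let ?K = "closure {x. 0 < u x}"
  have "compact ?K" using assms unfolding fuzzy_real_def by auto
  then have "bounded ?K" by (rule compact_imp_bounded)
  then obtain B where B: "\<And>x. x \<in> ?K \<Longrightarrow> \<bar>x\<bar> \<le> B" unfolding bounded_iff by auto
  obtain x1 where x1: "u x1 = 1" using assms unfolding fuzzy_real_def by auto
  have "\<bar>fcut_lo u \<alpha>\<bar> \<le> B \<and> \<bar>fcut_hi u \<alpha>\<bar> \<le> B" if "\<alpha> \<in> {0..1}" for \<alpha>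
  proof -
    have sub: "fcut u \<alpha> \<subseteq> ?K"
      unfolding fcut_def using that closure_subset[of "{x. 0 < u x}"] by auto
    have "x1 \<in> fcut u \<alpha>"
      unfolding fcut_def using that x1 closure_subset[of "{x. 0 < u x}"] by auto
    then have ne: "fcut u \<alpha> \<noteq> {}" by auto
    have "\<And>x. x \<in> fcut u \<alpha> \<Longrightarrow> \<bar>x\<bar> \<le> B" using sub B by auto
    from inf_sup_bound[OF ne this] show ?thesis unfolding fcut_lo_def fcut_hi_def by auto
  qed
  then show ?thesis using that by blast
qed

lemma fuzzy_dist_nonneg:
  assumes "fuzzy_real u" "fuzzy_real v"
  shows "0 \<le> fuzzy_dist u v"
proof -
  obtain B1 where B1: "\<And>\<alpha>. \<alpha> \<in> {0..1} \<Longrightarrow> \<bar>fcut_lo u \<alpha>\<bar> \<le> B1 \<and> \<bar>fcut_hi u \<alpha>\<bar> \<le> B1"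
    using fcut_bound[OF assms(1)] by blast
  obtain B2 where B2: "\<And>\<alpha>. \<alpha> \<in> {0..1} \<Longrightarrow> \<bar>fcut_lo v \<alpha>\<bar> \<le> B2 \<and> \<bar>fcut_hi v \<alpha>\<bar> \<le> B2"
    using fcut_bound[OF assms(2)] by blast
  let ?h = "\<lambda>\<alpha>. max \<bar>fcut_lo u \<alpha> - fcut_lo v \<alpha>\<bar> \<bar>fcut_hi u \<alpha> - fcut_hi v \<alpha>\<bar>"
  have bdd: "bdd_above (?h ` {0..1})"
  proof (rule bdd_aboveI2)
    fix \<alpha> :: real assume "\<alpha> \<in> {0..1}"
    from B1[OF this] B2[OF this] show "?h \<alpha> \<le> B1 + B2" by auto
  qed
  have "?h 0 \<le> (SUP \<alpha>\<in>{0..1}. ?h \<alpha>)"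
    by (rule cSUP_upper[OF _ bdd]) auto
  moreover have "0 \<le> ?h 0" by auto
  ultimately show ?thesis unfolding fuzzy_dist_def by linarith
qed

theorem theorem3p3:
  fixes \<beta> \<gamma> t :: "nat \<Rightarrow> real"
    and \<theta>1 \<theta>2 a b :: real
    and f :: "nat \<Rightarrow> real \<Rightarrow> (real \<Rightarrow> real)"
    and g :: "real \<Rightarrow> (real \<Rightarrow> real)"
  assumes beta_pos: "\<And>n. 0 < \<beta> n" and beta_mono: "mono \<beta>"
    and gamma_pos: "\<And>n. 0 < \<gamma> n" and gamma_mono: "mono \<gamma>"
    and gamma_ge: "\<And>n. \<beta> n \<le> \<gamma> n"
    and diff_inf: "filterlim (\<lambda>n. \<gamma> n - \<beta> n) at_top sequentially"
    and t_pos: "\<And>n. 0 < t n"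
    and t_liminf: "Liminf sequentially (\<lambda>n. ereal (t n)) > 0"
    and T_inf: "filterlim (T_bg \<beta> \<gamma> t) at_top sequentially"
    and theta: "0 < \<theta>1" "\<theta>1 \<le> \<theta>2" "\<theta>2 \<le> 1"
    and ratio: "Liminf sequentially (\<lambda>n. ereal (\<gamma> n / T_bg \<beta> \<gamma> t n)) > 1"
    and beta_le1: "\<And>n. \<beta> n \<le> 1"
    and f_fuzzy: "\<And>k x. x \<in> {a..b} \<Longrightarrow> fuzzy_real (f k x)"
    and g_fuzzy: "\<And>x. x \<in> {a..b} \<Longrightarrow> fuzzy_real (g x)"
    and summ: "\<And>x. x \<in> {a..b} \<Longrightarrow>
       (\<lambda>n. (1 / T_bg \<beta> \<gamma> t n powr \<theta>1) *
             (\<Sum>k\<in>bg_int \<beta> \<gamma> n. t k * fuzzy_dist (f k x) (g x))) \<longlonglongrightarrow> 0"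
  shows "\<forall>\<epsilon>>0. \<forall>x\<in>{a..b}.
    (\<lambda>n. (1 / T_bg \<beta> \<gamma> t n powr \<theta>2) *
          real (card {k::nat. 0 < k \<and> real k \<le> T_bg \<beta> \<gamma> t n \<and> \<epsilon> \<le> t k * fuzzy_dist (f k x) (g x)}))
    \<longlonglongrightarrow> 0"
proof (intro allI impI ballI)
  fix \<epsilon> :: real and x assume eps: "\<epsilon> > 0" and x: "x \<in> {a..b}"
  define T where "T = T_bg \<beta> \<gamma> t"
  define d where "d = (\<lambda>k. t k * fuzzy_dist (f k x) (g x))"
  define S where "S = (\<lambda>n. {k::nat. 0 < k \<and> real k \<le> T n \<and> \<epsilon> \<le> d k})"
  have dnn: "0 \<le> d k" for k
    unfolding d_def using fuzzy_dist_nonneg[OF f_fuzzy[OF x] g_fuzzy[OF x]] t_pos[of k] by simp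
  have ev1: "eventually (\<lambda>n. 1 \<le> T n) sequentially"
    using T_inf unfolding T_def filterlim_at_top by auto
  have ev2: "eventually (\<lambda>n. ereal 1 < ereal (\<gamma> n / T n)) sequentially"
    using ratio unfolding T_def by (intro less_LiminfD) (simp add: one_ereal_def)
  have bound: "eventually (\<lambda>n. 1 / T n powr \<theta>2 * real (card (S n))
      \<le> (1/\<epsilon>) * ((1 / T n powr \<theta>1) * (\<Sum>k\<in>bg_int \<beta> \<gamma> n. d k))) sequentially"
    using ev1 ev2
  proof eventually_elim
    case (elim n)
    then have Tp: "T n > 0" by auto
    from elim have lt: "T n < \<gamma> n" using Tp by (simp add: field_simps)
    have fin: "finite (bg_int \<beta> \<gamma> n)"
      by (rule finite_subset[of _ "{..nat \<lceil>\<gamma> n\<rceil>}"]) (auto simp: bg_int_def le_nat_iff, metis ceiling_mono ceiling_of_nat)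
    have sub: "S n \<subseteq> bg_int \<beta> \<gamma> n"
      unfolding S_def bg_int_def using lt beta_le1[of n] by force
    have "\<epsilon> * real (card (S n)) = (\<Sum>k\<in>S n. \<epsilon>)" by simp
    also have "\<dots> \<le> (\<Sum>k\<in>S n. d k)"
      by (rule sum_mono) (auto simp: S_def)
    also have "\<dots> \<le> (\<Sum>k\<in>bg_int \<beta> \<gamma> n. d k)"
      by (rule sum_mono2[OF fin sub]) (simp add: dnn)
    finally have c: "real (card (S n)) \<le> (\<Sum>k\<in>bg_int \<beta> \<gamma> n. d k) / \<epsilon>"
      using eps by (simp add: field_simps)
    have pw: "T n powr \<theta>1 \<le> T n powr \<theta>2"
      using elim theta by (intro powr_mono) auto
    have p1: "T n powr \<theta>1 > 0" using Tp by simp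
    have sn: "0 \<le> (\<Sum>k\<in>bg_int \<beta> \<gamma> n. d k)" by (simp add: dnn sum_nonneg)
    have "1 / T n powr \<theta>2 * real (card (S n)) \<le> 1 / T n powr \<theta>2 * ((\<Sum>k\<in>bg_int \<beta> \<gamma> n. d k) / \<epsilon>)"
      using c p1 pw by (intro mult_left_mono) auto
    also have "\<dots> \<le> 1 / T n powr \<theta>1 * ((\<Sum>k\<in>bg_int \<beta> \<gamma> n. d k) / \<epsilon>)"
      using p1 pw sn eps by (intro mult_right_mono divide_left_mono) auto
    finally show ?case by (simp add: field_simps)
  qed
  have lim: "(\<lambda>n. (1/\<epsilon>) * ((1 / T n powr \<theta>1) * (\<Sum>k\<in>bg_int \<beta> \<gamma> n. d k))) \<longlonglongrightarrow> 0"
    using tendsto_mult_right_zero[OF summ[OF x], of "1/\<epsilon>"] unfolding T_def d_def by simp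
  have "(\<lambda>n. 1 / T n powr \<theta>2 * real (card (S n))) \<longlonglongrightarrow> 0"
    by (rule tendsto_sandwich[OF _ bound tendsto_const lim]) auto
  then show "(\<lambda>n. (1 / T_bg \<beta> \<gamma> t n powr \<theta>2) *
          real (card {k::nat. 0 < k \<and> real k \<le> T_bg \<beta> \<gamma> t n \<and> \<epsilon> \<le> t k * fuzzy_dist (f k x) (g x)}))
    \<longlonglongrightarrow> 0" unfolding S_def T_def d_def .
qed

end
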